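(* Let $A$ be a commutative ring, $r,d\ge1$, $B=A[x_1,\dots,x_r]$, let $k\ge1$ and $\alpha\in\mathbb{N}^r\setminus\{0\}$ with $\gcd(\alpha)$ invertible in $A$. If $k|\alpha|\le d$, then $\gamma^k(x^\alpha)\times\gamma^{d-k}(1)\notin\Gamma^d_A(B)_{<k\alpha}$.
   Context: $\Gamma^d_A(B)$ is identified with $\mathrm{TS}^d_A(B)=(B^{\otimes_A d})^{\mathfrak S_d}$ (componentwise multiplication). For a monomial $f$, $\gamma^k(f)\times\gamma^{d-k}(1)=\sum_{S\subseteq\{1..d\},|S|=k}\bigotimes_{j}f_j$ with $f_j=f$ for $j\in S$, $f_j=1$ otherwise. $B^{\otimes d}$ is $\mathbb{N}^r$-graded by giving $x^{\beta_1}\otimes\dots\otimes x^{\beta_d}$ multidegree $\beta_1+\dots+\beta_d$. $\beta<\gamma$ means $\beta\le\gamma$ componentwise and $\beta\neq\gamma$; $\Gamma^d_A(B)_{<\gamma}$ is the $A$-subalgebra generated by homogeneous elements of multidegree $<\gamma$. *)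

theory Defs
  imports "HOL-Library.Poly_Mapping" "HOL-Combinatorics.Permutations"
begin

text \<open>Model of B^(tensor d) for B = A[x_0..x_{r-1}]: the polynomial ring over A in the
variables x_{j,i} (j < d tensor factor, i < r variable), i.e. x^b_0 (x) ... (x) x^b_(d-1)
is the monomial with exponent b_j i at variable (j,i).\<close>

type_synonym tmon = "(nat \<times> nat) \<Rightarrow>\<^sub>0 nat"
type_synonym 'a tpoly = "tmon \<Rightarrow>\<^sub>0 'a"

definition in_tensor :: "nat \<Rightarrow> nat \<Rightarrow> ('a::zero) tpoly \<Rightarrow> bool" where
  "in_tensor d r p \<longleftrightarrow> (\<forall>m::tmon. m \<in> Poly_Mapping.keys p \<longrightarrow> Poly_Mapping.keys m \<subseteq> {..<d} \<times> {..<r})"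

definition perm_mon :: "(nat \<Rightarrow> nat) \<Rightarrow> tmon \<Rightarrow> tmon" where
  "perm_mon \<sigma> m = Abs_poly_mapping (\<lambda>(j,i). Poly_Mapping.lookup m (\<sigma> j, i))"

definition symmetric_tensor :: "nat \<Rightarrow> nat \<Rightarrow> ('a::zero) tpoly \<Rightarrow> bool" where
  "symmetric_tensor d r p \<longleftrightarrow> in_tensor d r p \<and>
     (\<forall>\<sigma> m. \<sigma> permutes {..<d} \<longrightarrow> Poly_Mapping.lookup p (perm_mon \<sigma> m) = Poly_Mapping.lookup p m)"

definition mdeg :: "nat \<Rightarrow> tmon \<Rightarrow> nat \<Rightarrow> nat" where
  "mdeg d m i = (\<Sum>j<d. Poly_Mapping.lookup m (j, i))"

definition homogeneous_of :: "nat \<Rightarrow> nat \<Rightarrow> (nat \<Rightarrow> nat) \<Rightarrow> ('a::zero) tpoly \<Rightarrow> bool" where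
  "homogeneous_of d r \<beta> p \<longleftrightarrow> (\<forall>m\<in>Poly_Mapping.keys p. \<forall>i<r. mdeg d m i = \<beta> i)"

definition mdeg_less :: "nat \<Rightarrow> (nat \<Rightarrow> nat) \<Rightarrow> (nat \<Rightarrow> nat) \<Rightarrow> bool" where
  "mdeg_less r \<beta> \<gamma> \<longleftrightarrow> (\<forall>i<r. \<beta> i \<le> \<gamma> i) \<and> (\<exists>i<r. \<beta> i \<noteq> \<gamma> i)"

inductive_set subalg_gen :: "('a::comm_ring_1) tpoly set \<Rightarrow> 'a tpoly set" for G where
  const: "Poly_Mapping.single 0 c \<in> subalg_gen G"
| gen: "g \<in> G \<Longrightarrow> g \<in> subalg_gen G"
| add: "p \<in> subalg_gen G \<Longrightarrow> q \<in> subalg_gen G \<Longrightarrow> p + q \<in> subalg_gen G"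
| mult: "p \<in> subalg_gen G \<Longrightarrow> q \<in> subalg_gen G \<Longrightarrow> p * q \<in> subalg_gen G"

definition Gamma_less :: "nat \<Rightarrow> nat \<Rightarrow> (nat \<Rightarrow> nat) \<Rightarrow> ('a::comm_ring_1) tpoly set" where
  "Gamma_less d r \<gamma> = subalg_gen {p. symmetric_tensor d r p \<and>
       (\<exists>\<beta>. mdeg_less r \<beta> \<gamma> \<and> homogeneous_of d r \<beta> p)}"

definition mon_on :: "nat \<Rightarrow> (nat \<Rightarrow> nat) \<Rightarrow> nat set \<Rightarrow> tmon" where
  "mon_on r \<alpha> S = (\<Sum>j\<in>S. \<Sum>i<r. Poly_Mapping.single (j, i) (\<alpha> i))"

text \<open>gamma^k(x^alpha) times gamma^(d-k)(1) = sum over k-subsets S of the d factors.\<close>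
definition gamma_prod :: "nat \<Rightarrow> nat \<Rightarrow> (nat \<Rightarrow> nat) \<Rightarrow> nat \<Rightarrow> ('a::comm_ring_1) tpoly" where
  "gamma_prod d r \<alpha> k = (\<Sum>S\<in>{S. S \<subseteq> {..<d} \<and> card S = k}. Poly_Mapping.single (mon_on r \<alpha> S) 1)"

end

theory Submission
  imports Defs
begin


lemma D0:
  assumes "i < n"
  shows "(\<Sum>v\<le>n. (-1::int)^v * of_nat (n choose v) * of_nat (v choose i)) = 0"
proof -
  have "(\<Sum>v\<le>n. (-1::int)^v * of_nat (n choose v) * of_nat (v choose i))
      = (\<Sum>v\<in>{i..n}. (-1::int)^v * of_nat (n choose i) * of_nat ((n-i) choose (v-i)))"
  proof (rule sum.mono_neutral_cong_right)
    show "\<forall>v\<in>{..n} - {i..n}. (-1::int)^v * of_nat (n choose v) * of_nat (v choose i) = 0"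
      by auto
    fix v assume "v \<in> {i..n}"
    then show "(-1::int)^v * of_nat (n choose v) * of_nat (v choose i) = (-1::int)^v * of_nat (n choose i) * of_nat ((n-i) choose (v-i))"
      using choose_mult[of i v n] by (simp add: mult.assoc flip: of_nat_mult)
  qed auto
  also have "\<dots> = (\<Sum>u\<in>{0..n-i}. (-1::int)^(u+i) * of_nat (n choose i) * of_nat ((n-i) choose u))"
    using sum.shift_bounds_cl_nat_ivl[of "\<lambda>v. (-1::int)^v * of_nat (n choose i) * of_nat ((n-i) choose (v-i))" 0 i "n-i"] assms
    by simp
  also have "\<dots> = (-1)^i * of_nat (n choose i) * (\<Sum>u\<le>n-i. (-1::int)^u * of_nat ((n-i) choose u))"
    by (simp add: sum_distrib_left power_add atLeast0AtMost mult_ac)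
  also have "\<dots> = 0" using assms by (simp add: choose_alternating_sum)
  finally show ?thesis .
qed

lemma D1:
  assumes "j < n"
  shows "(\<Sum>v\<le>n. (-1::int)^v * of_nat (n choose v) * of_nat ((v + c) choose j)) = 0"
proof -
  have "(\<Sum>v\<le>n. (-1::int)^v * of_nat (n choose v) * of_nat ((v + c) choose j))
     = (\<Sum>v\<le>n. \<Sum>l\<le>j. (-1::int)^v * of_nat (n choose v) * (of_nat (v choose l) * of_nat (c choose (j - l))))"
    by (simp only: vandermonde[symmetric] of_nat_sum sum_distrib_left of_nat_mult)
  also have "\<dots> = (\<Sum>l\<le>j. of_nat (c choose (j - l)) * (\<Sum>v\<le>n. (-1::int)^v * of_nat (n choose v) * of_nat (v choose l)))"
    by (subst sum.swap) (simp add: sum_distrib_left mult_ac)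
  also have "\<dots> = 0" using assms by (simp add: D0)
  finally show ?thesis .
qed



lemma IdProd:
  assumes "1 \<le> s" "1 \<le> t" "s + t \<le> N"
  shows "(\<Sum>m\<in>{1..N}. (-1::int)^(m-1) * of_nat (N choose m) * of_nat ((m-1) choose (s-1)) * of_nat (m choose t)) = 0"
proof -
  have "(\<Sum>m\<in>{1..N}. (-1::int)^(m-1) * of_nat (N choose m) * of_nat ((m-1) choose (s-1)) * of_nat (m choose t))
      = (\<Sum>m\<in>{t..N}. (-1::int)^(m-1) * of_nat (N choose t) * of_nat ((N-t) choose (m-t)) * of_nat ((m-1) choose (s-1)))"
  proof (rule sum.mono_neutral_cong_right)
    show "{t..N} \<subseteq> {1..N}" using assms by auto
    show "\<forall>v\<in>{1..N} - {t..N}. (-1::int)^(v-1) * of_nat (N choose v) * of_nat ((v-1) choose (s-1)) * of_nat (v choose t) = 0"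
      by auto
    fix m assume "m \<in> {t..N}"
    then show "(-1::int)^(m-1) * of_nat (N choose m) * of_nat ((m-1) choose (s-1)) * of_nat (m choose t) = (-1::int)^(m-1) * of_nat (N choose t) * of_nat ((N-t) choose (m-t)) * of_nat ((m-1) choose (s-1))"
      using choose_mult[of t m N] by (simp add: mult_ac flip: of_nat_mult)
  qed auto
  also have "\<dots> = (\<Sum>v\<in>{0..N-t}. (-1::int)^(v+t-1) * of_nat (N choose t) * of_nat ((N-t) choose v) * of_nat ((v+(t-1)) choose (s-1)))"
    using sum.shift_bounds_cl_nat_ivl[of "\<lambda>m. (-1::int)^(m-1) * of_nat (N choose t) * of_nat ((N-t) choose (m-t)) * of_nat ((m-1) choose (s-1))" 0 t "N-t"] assms
    by (simp add: add.commute)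
  also have "\<dots> = (-1)^(t-1) * of_nat (N choose t) * (\<Sum>v\<le>N-t. (-1::int)^v * of_nat ((N-t) choose v) * of_nat ((v+(t-1)) choose (s-1)))"
  proof -
    have "\<And>v. (-1::int)^(v+t-1) = (-1)^v * (-1)^(t-1)" using assms
      by (metis Nat.add_diff_assoc le_add2 le_trans power_add)
    then show ?thesis by (simp add: sum_distrib_left atLeast0AtMost mult_ac)
  qed
  also have "\<dots> = 0" using assms D1[of "s-1" "N-t" "t-1"] by simp
  finally show ?thesis .
qed

lemma IdG:
  assumes "1 \<le> k" "k \<le> N"
  shows "(\<Sum>m\<in>{1..N}. (-1::int)^(m-1) * of_nat (N choose m) * of_nat ((m-1) choose (k-1))) = (-1)^(k-1)"
  using assms
proof (induction k rule: nat_induct_at_least)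
  case base
  have "(\<Sum>m\<le>N. (-1::int)^m * of_nat (N choose m)) = 0"
    using base by (simp add: choose_alternating_sum)
  moreover have "(\<Sum>m\<le>N. (-1::int)^m * of_nat (N choose m)) = 1 + (\<Sum>m\<in>{1..N}. (-1::int)^m * of_nat (N choose m))"
    by (simp add: atMost_atLeast0 sum.atLeast_Suc_atMost)
  moreover have "(-1::int)^(m-1) = - ((-1)^m)" if "m \<in> {1..N}" for m
    using that by (cases m) auto
  ultimately show ?case by (simp add: sum_negf)
next
  case (Suc k)
  have IH: "(\<Sum>m\<in>{1..N}. (-1::int)^(m-1) * of_nat (N choose m) * of_nat ((m-1) choose (k-1))) = (-1)^(k-1)"
    using Suc by auto
  have "(\<Sum>m\<le>N. (-1::int)^m * of_nat (N choose m) * of_nat (m choose k)) = 0"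
    using Suc D0[of k N] by auto
  moreover have "(\<Sum>m\<le>N. (-1::int)^m * of_nat (N choose m) * of_nat (m choose k))
     = - (\<Sum>m\<in>{1..N}. (-1::int)^(m-1) * of_nat (N choose m) * of_nat (m choose k))"
  proof -
    have "(\<Sum>m\<le>N. (-1::int)^m * of_nat (N choose m) * of_nat (m choose k)) = (\<Sum>m\<in>{1..N}. (-1::int)^m * of_nat (N choose m) * of_nat (m choose k))"
      using Suc by (simp add: atMost_atLeast0 sum.atLeast_Suc_atMost)
    moreover have "(-1::int)^(m-1) = - ((-1)^m)" if "m \<in> {1..N}" for m
      using that by (cases m) auto
    ultimately show ?thesis by (simp add: sum_negf[symmetric])
  qed
  moreover have "(\<Sum>m\<in>{1..N}. (-1::int)^(m-1) * of_nat (N choose m) * of_nat (m choose k))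
     = (\<Sum>m\<in>{1..N}. (-1::int)^(m-1) * of_nat (N choose m) * of_nat ((m-1) choose (Suc k - 1)))
     + (\<Sum>m\<in>{1..N}. (-1::int)^(m-1) * of_nat (N choose m) * of_nat ((m-1) choose (k-1)))"
  proof -
    have "m choose k = ((m-1) choose k) + ((m-1) choose (k-1))" if "m \<in> {1..N}" for m
      using Suc(1) that by (cases m; cases k) auto
    then show ?thesis by (simp add: sum.distrib[symmetric] distrib_left)
  qed
  moreover have "(-1::int)^(Suc k - 1) = - ((-1)^(k-1))" using Suc.hyps by (cases k) auto
  ultimately show ?case using IH by linarith
qed



abbreviation lk where "lk \<equiv> Poly_Mapping.lookup"
abbreviation ks where "ks \<equiv> Poly_Mapping.keys"

definition slots :: "tmon \<Rightarrow> nat set" where "slots M = fst ` ks M"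

definition symm :: "nat \<Rightarrow> ('a::zero) tpoly \<Rightarrow> bool" where
  "symm d p \<longleftrightarrow> (\<forall>\<sigma> m. \<sigma> permutes {..<d} \<longrightarrow> lk p (perm_mon \<sigma> m) = lk p m)"

lemma lookup_perm_mon:
  assumes "\<sigma> permutes {..<d}"
  shows "lk (perm_mon \<sigma> m) x = lk m (\<sigma> (fst x), snd x)"
proof -
  have sinv: "\<sigma> (inv \<sigma> y) = y" "inv \<sigma> (\<sigma> y) = y" for y
    using assms permutes_inverses by fastforce+
  have sub: "{x. lk m (\<sigma> (fst x), snd x) \<noteq> 0} \<subseteq> (\<lambda>x. (inv \<sigma> (fst x), snd x)) ` ks m"
  proof
    fix x assume "x \<in> {x. lk m (\<sigma> (fst x), snd x) \<noteq> 0}"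
    then have "(\<sigma> (fst x), snd x) \<in> ks m" by (simp add: in_keys_iff)
    moreover have "x = (inv \<sigma> (\<sigma> (fst x)), snd x)" using sinv by simp
    ultimately show "x \<in> (\<lambda>x. (inv \<sigma> (fst x), snd x)) ` ks m"
      by (metis (no_types, lifting) fst_conv image_eqI snd_conv)
  qed
  have fin: "finite {x. lk m (\<sigma> (fst x), snd x) \<noteq> 0}"
    by (rule finite_subset[OF sub]) simp
  have "perm_mon \<sigma> m = Abs_poly_mapping (\<lambda>x. lk m (\<sigma> (fst x), snd x))"
    unfolding perm_mon_def by (simp add: split_def)
  then show ?thesis using lookup_Abs_poly_mapping[OF fin] by simp
qed

lemma perm_mon_add:
  assumes "\<sigma> permutes {..<d}"
  shows "perm_mon \<sigma> (a + b) = perm_mon \<sigma> a + perm_mon \<sigma> b"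
  by (rule poly_mapping_eqI) (simp add: lookup_perm_mon[OF assms] lookup_add)

lemma perm_mon_zero:
  assumes "\<sigma> permutes {..<d}"
  shows "perm_mon \<sigma> 0 = 0"
  by (rule poly_mapping_eqI) (simp add: lookup_perm_mon[OF assms])

lemma perm_mon_comp:
  assumes "\<sigma> permutes {..<d}" "\<tau> permutes {..<d}"
  shows "perm_mon \<sigma> (perm_mon \<tau> m) = perm_mon (\<tau> \<circ> \<sigma>) m"
proof -
  have c: "(\<tau> \<circ> \<sigma>) permutes {..<d}" using assms by (simp add: permutes_compose)
  show ?thesis
    by (intro poly_mapping_eqI) (simp add: lookup_perm_mon[OF assms(1)] lookup_perm_mon[OF assms(2)] lookup_perm_mon[OF c])
qed

lemma perm_mon_id: "perm_mon id m = m"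
  by (rule poly_mapping_eqI) (simp add: lookup_perm_mon[OF permutes_id])

lemma perm_mon_inv1:
  assumes "\<sigma> permutes {..<d}"
  shows "perm_mon \<sigma> (perm_mon (inv \<sigma>) m) = m"
  using assms permutes_inv[OF assms] by (simp add: perm_mon_comp permutes_inv_o perm_mon_id)

lemma perm_mon_inv2:
  assumes "\<sigma> permutes {..<d}"
  shows "perm_mon (inv \<sigma>) (perm_mon \<sigma> m) = m"
  using assms permutes_inv[OF assms] by (simp add: perm_mon_comp permutes_inv_o perm_mon_id)

lemma perm_mon_eq0_iff:
  assumes "\<sigma> permutes {..<d}"
  shows "perm_mon \<sigma> m = 0 \<longleftrightarrow> m = 0"
  by (metis assms perm_mon_inv2 perm_mon_zero permutes_inv)

lemma slots_perm_mon:
  assumes "\<sigma> permutes {..<d}"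
  shows "slots (perm_mon \<sigma> m) = \<sigma> -` slots m"
  unfolding slots_def
proof (intro set_eqI iffI)
  fix x assume "x \<in> fst ` ks (perm_mon \<sigma> m)"
  then obtain y where y: "y \<in> ks (perm_mon \<sigma> m)" "x = fst y" by auto
  then have "(\<sigma> x, snd y) \<in> ks m" by (simp add: in_keys_iff lookup_perm_mon[OF assms])
  then show "x \<in> \<sigma> -` fst ` ks m" by force
next
  fix x assume "x \<in> \<sigma> -` fst ` ks m"
  then obtain z where z: "z \<in> ks m" "\<sigma> x = fst z" by auto
  then have "(x, snd z) \<in> ks (perm_mon \<sigma> m)" by (simp add: in_keys_iff lookup_perm_mon[OF assms])
  then show "x \<in> fst ` ks (perm_mon \<sigma> m)" by force
qed

lemma slots_perm_mon_eq:
  assumes "\<sigma> permutes {..<d}"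
  shows "slots (perm_mon \<sigma> m) = S \<longleftrightarrow> slots m = \<sigma> ` S"
proof -
  have b: "bij \<sigma>" using assms permutes_bij by blast
  then have s: "surj \<sigma>" and i: "inj \<sigma>" by (auto simp: bij_def)
  show ?thesis unfolding slots_perm_mon[OF assms]
    using surj_image_vimage_eq[OF s] inj_vimage_image_eq[OF i] by metis
qed

lemma mdeg_perm_mon:
  assumes "\<sigma> permutes {..<d}"
  shows "mdeg d (perm_mon \<sigma> m) i = mdeg d m i"
proof -
  have "mdeg d (perm_mon \<sigma> m) i = (\<Sum>j<d. (\<lambda>j. lk m (j, i)) (\<sigma> j))"
    unfolding mdeg_def by (simp add: lookup_perm_mon[OF assms])
  also have "\<dots> = (\<Sum>j<d. lk m (j, i))"
    using sum.permute[OF assms, of "\<lambda>j. lk m (j, i)"] by (simp add: comp_def)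
  finally show ?thesis unfolding mdeg_def .
qed

lemma reindex_symm:
  assumes "symm d p" "\<sigma> permutes {..<d}"
  shows "(\<Sum>a\<in>ks p. F a * lk p a) = (\<Sum>a\<in>ks p. F (perm_mon \<sigma> a) * lk p a)"
proof -
  have si: "inv \<sigma> permutes {..<d}" using permutes_inv[OF assms(2)] .
  have sy: "lk p (perm_mon \<sigma> a) = lk p a" for a using assms unfolding symm_def by blast
  have sy2: "lk p (perm_mon (inv \<sigma>) a) = lk p a" for a using assms si unfolding symm_def by blast
  show ?thesis
  proof (rule sum.reindex_bij_witness[of _ "perm_mon \<sigma>" "perm_mon (inv \<sigma>)"])
    fix a assume "a \<in> ks p"
    show "perm_mon \<sigma> (perm_mon (inv \<sigma>) a) = a" using perm_mon_inv1[OF assms(2)] .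
    show "perm_mon (inv \<sigma>) a \<in> ks p" using \<open>a \<in> ks p\<close> sy2 by (simp add: in_keys_iff)
    show "F (perm_mon \<sigma> (perm_mon (inv \<sigma>) a)) * lk p (perm_mon (inv \<sigma>) a) = F a * lk p a"
      using sy2 perm_mon_inv1[OF assms(2)] by simp
  next
    fix b assume "b \<in> ks p"
    show "perm_mon (inv \<sigma>) (perm_mon \<sigma> b) = b" using perm_mon_inv2[OF assms(2)] .
    show "perm_mon \<sigma> b \<in> ks p" using \<open>b \<in> ks p\<close> sy by (simp add: in_keys_iff)
  qed
qed

lemma expand_pm: "p = (\<Sum>a\<in>ks p. Poly_Mapping.single a (lk p a))"
  by (rule poly_mapping_eqI) (simp add: lookup_sum lookup_single when_def in_keys_iff)

lemma lookup_mult_keys: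
  "lk (p * q) M = (\<Sum>a\<in>ks p. \<Sum>b\<in>ks q. if a + b = M then lk p a * lk q b else (0::'b::comm_semiring_1))"
proof -
  have "p * q = (\<Sum>a\<in>ks p. Poly_Mapping.single a (lk p a)) * (\<Sum>b\<in>ks q. Poly_Mapping.single b (lk q b))"
    by (simp flip: expand_pm)
  also have "\<dots> = (\<Sum>a\<in>ks p. \<Sum>b\<in>ks q. Poly_Mapping.single (a + b) (lk p a * lk q b))"
    by (simp add: sum_product mult_single)
  finally show ?thesis
    by (simp add: lookup_sum lookup_single when_def)
qed



lemma symm_add: "symm d p \<Longrightarrow> symm d q \<Longrightarrow> symm d (p + q)"
  unfolding symm_def by (simp add: lookup_add)

lemma symm_diff: "symm d p \<Longrightarrow> symm d q \<Longrightarrow> symm d (p - (q::'a::ab_group_add tpoly))"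
  unfolding symm_def by (simp add: lookup_minus)

lemma symm_single0: "symm d (Poly_Mapping.single 0 c)"
  unfolding symm_def by (auto simp: lookup_single when_def perm_mon_eq0_iff)

lemma perm_mon_add_eq_iff:
  assumes "\<sigma> permutes {..<d}"
  shows "perm_mon \<sigma> a + perm_mon \<sigma> b = perm_mon \<sigma> M \<longleftrightarrow> a + b = M"
  by (metis assms perm_mon_add perm_mon_inv2)

lemma sum_if_aux:
  "(\<Sum>b\<in>B. (if P b then 1 else 0) * g b) * (x::'a::comm_ring_1) = (\<Sum>b\<in>B. if P b then x * g b else 0)"
  by (simp add: sum_distrib_right) (rule sum.cong, auto simp: mult_ac)

lemma symm_mult:
  assumes p: "symm d p" and q: "symm d (q::'a::comm_ring_1 tpoly)"
  shows "symm d (p * q)"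
  unfolding symm_def
proof (intro allI impI)
  fix \<sigma> M assume s: "\<sigma> permutes {..<d}"
  have "lk (p * q) (perm_mon \<sigma> M) = (\<Sum>a\<in>ks p. (\<Sum>b\<in>ks q. (if a + b = perm_mon \<sigma> M then 1 else 0) * lk q b) * lk p a)"
    unfolding lookup_mult_keys sum_if_aux by (simp add: mult_ac)
  also have "\<dots> = (\<Sum>a\<in>ks p. (\<Sum>b\<in>ks q. (if a + perm_mon \<sigma> b = perm_mon \<sigma> M then 1 else 0) * lk q b) * lk p a)"
    by (rule sum.cong[OF refl]) (simp add: reindex_symm[OF q s, of "\<lambda>b. (if _ + b = perm_mon \<sigma> M then 1 else 0)"])
  also have "\<dots> = (\<Sum>a\<in>ks p. (\<Sum>b\<in>ks q. (if perm_mon \<sigma> a + perm_mon \<sigma> b = perm_mon \<sigma> M then 1 else 0) * lk q b) * lk p a)"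
    by (rule reindex_symm[OF p s, of "\<lambda>a. (\<Sum>b\<in>ks q. (if a + perm_mon \<sigma> b = perm_mon \<sigma> M then 1 else 0) * lk q b)"])
  also have "\<dots> = (\<Sum>a\<in>ks p. (\<Sum>b\<in>ks q. (if a + b = M then 1 else 0) * lk q b) * lk p a)"
    by (simp add: perm_mon_add_eq_iff[OF s])
  also have "\<dots> = lk (p * q) M"
    unfolding lookup_mult_keys sum_if_aux by (simp add: mult_ac)
  finally show "lk (p * q) (perm_mon \<sigma> M) = lk (p * q) M" .
qed

lemma in_tensor_add: "in_tensor d r p \<Longrightarrow> in_tensor d r q \<Longrightarrow> in_tensor d r (p + q)"
  unfolding in_tensor_def
proof (intro allI impI)
  fix m assume as: "\<forall>m. m \<in> ks p \<longrightarrow> ks m \<subseteq> {..<d} \<times> {..<r}" "\<forall>m. m \<in> ks q \<longrightarrow> ks m \<subseteq> {..<d} \<times> {..<r}"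
    and "m \<in> ks (p + q)"
  then have "m \<in> ks p \<or> m \<in> ks q" by (auto simp: in_keys_iff lookup_add)
  then show "ks m \<subseteq> {..<d} \<times> {..<r}" using as by blast
qed

lemma in_tensor_diff: "in_tensor d r p \<Longrightarrow> in_tensor d r q \<Longrightarrow> in_tensor d r (p - (q::'a::ab_group_add tpoly))"
  unfolding in_tensor_def
proof (intro allI impI)
  fix m assume as: "\<forall>m. m \<in> ks p \<longrightarrow> ks m \<subseteq> {..<d} \<times> {..<r}" "\<forall>m. m \<in> ks q \<longrightarrow> ks m \<subseteq> {..<d} \<times> {..<r}"
    and "m \<in> ks (p - q)"
  then have "m \<in> ks p \<or> m \<in> ks q" by (auto simp: in_keys_iff lookup_minus)
  then show "ks m \<subseteq> {..<d} \<times> {..<r}" using as by blast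
qed

lemma in_tensor_single0: "in_tensor d r (Poly_Mapping.single 0 c)"
  unfolding in_tensor_def by simp

lemma in_tensor_mult:
  assumes "in_tensor d r p" "in_tensor d r (q::'a::comm_ring_1 tpoly)"
  shows "in_tensor d r (p * q)"
  unfolding in_tensor_def
proof (intro allI impI)
  fix m assume "m \<in> ks (p * q)"
  then obtain a b where ab: "m = a + b" "a \<in> ks p" "b \<in> ks q" using keys_mult by blast
  have "ks a \<subseteq> {..<d} \<times> {..<r}" "ks b \<subseteq> {..<d} \<times> {..<r}"
    using assms ab unfolding in_tensor_def by auto
  then show "ks m \<subseteq> {..<d} \<times> {..<r}"
    using keys_add[of a b] ab(1) by blast
qed

definition PHI :: "(tmon \<Rightarrow> 'a) \<Rightarrow> 'a tpoly \<Rightarrow> 'a::comm_ring_1" where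
  "PHI w f = (\<Sum>M\<in>ks f. w M * lk f M)"

lemma PHI_superset:
  assumes "finite K" "ks f \<subseteq> K"
  shows "PHI w f = (\<Sum>M\<in>K. w M * lk f M)"
  unfolding PHI_def by (rule sum.mono_neutral_left) (use assms in \<open>auto simp: in_keys_iff\<close>)

lemma PHI_add: "PHI w (f + g) = PHI w f + PHI w g"
proof -
  let ?K = "ks f \<union> ks g"
  have "PHI w (f + g) = (\<Sum>M\<in>?K. w M * lk (f + g) M)"
    by (intro PHI_superset) (auto simp: in_keys_iff lookup_add)
  also have "\<dots> = (\<Sum>M\<in>?K. w M * lk f M) + (\<Sum>M\<in>?K. w M * lk g M)"
    by (simp add: lookup_add distrib_left sum.distrib)
  also have "\<dots> = PHI w f + PHI w g"
    using PHI_superset[of "ks f \<union> ks g" f w] PHI_superset[of "ks f \<union> ks g" g w] by simp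
  finally show ?thesis .
qed

lemma PHI_diff: "PHI w (f - g) = PHI w f - PHI w g"
  by (metis PHI_add add_diff_cancel_right' diff_add_cancel)

lemma PHI_mult:
  "PHI w (p * q) = (\<Sum>a\<in>ks p. \<Sum>b\<in>ks q. w (a + b) * (lk p a * lk q b))"
proof -
  let ?K = "(\<lambda>(a, b). a + b) ` (ks p \<times> ks q)"
  have fK: "finite ?K" by simp
  have "ks (p * q) \<subseteq> ?K"
  proof
    fix x assume "x \<in> ks (p * q)"
    then obtain a b where "x = a + b" "a \<in> ks p" "b \<in> ks q" using keys_mult[of p q] by blast
    then show "x \<in> ?K" by force
  qed
  then have "PHI w (p * q) = (\<Sum>M\<in>?K. w M * lk (p * q) M)"
    by (intro PHI_superset fK)
  also have "\<dots> = (\<Sum>M\<in>?K. \<Sum>a\<in>ks p. \<Sum>b\<in>ks q. if a + b = M then w M * (lk p a * lk q b) else 0)"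
    unfolding lookup_mult_keys by (simp add: sum_distrib_left if_distrib cong: if_cong)
  also have "\<dots> = (\<Sum>a\<in>ks p. \<Sum>M\<in>?K. \<Sum>b\<in>ks q. if a + b = M then w M * (lk p a * lk q b) else 0)"
    by (rule sum.swap)
  also have "\<dots> = (\<Sum>a\<in>ks p. \<Sum>b\<in>ks q. \<Sum>M\<in>?K. if a + b = M then w M * (lk p a * lk q b) else 0)"
    by (rule sum.cong[OF refl], rule sum.swap)
  also have "\<dots> = (\<Sum>a\<in>ks p. \<Sum>b\<in>ks q. w (a + b) * (lk p a * lk q b))"
  proof (intro sum.cong refl)
    fix a b assume "a \<in> ks p" "b \<in> ks q"
    then have "a + b \<in> ?K" by force
    then show "(\<Sum>M\<in>?K. if a + b = M then w M * (lk p a * lk q b) else 0) = w (a + b) * (lk p a * lk q b)"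
      by (simp add: sum.delta)
  qed
  finally show ?thesis .
qed

lemma PHI_single0_mult: "PHI w (Poly_Mapping.single 0 c * f) = c * PHI w f"
proof (cases "c = 0")
  case True then show ?thesis by (simp add: PHI_def)
next
  case False
  have "PHI w (Poly_Mapping.single 0 c * f) = (\<Sum>a\<in>ks (Poly_Mapping.single 0 c). \<Sum>b\<in>ks f. w (a + b) * (lk (Poly_Mapping.single 0 c) a * lk f b))"
    by (rule PHI_mult)
  also have "\<dots> = (\<Sum>b\<in>ks f. w b * (c * lk f b))" using False by simp
  also have "\<dots> = c * PHI w f" by (simp add: PHI_def sum_distrib_left mult_ac)
  finally show ?thesis .
qed



definition Fw :: "nat \<Rightarrow> nat \<Rightarrow> (nat \<Rightarrow> nat) \<Rightarrow> nat \<Rightarrow> nat \<Rightarrow> tmon \<Rightarrow> 'a::comm_ring_1" where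
  "Fw d r \<gamma> ii m M = (if slots M \<subseteq> {..<m} \<and> (\<forall>i<r. mdeg d M i = \<gamma> i) then of_nat (lk M (0,ii)) else 0)"

definition cm :: "nat \<Rightarrow> nat \<Rightarrow> 'a::comm_ring_1" where
  "cm d m = of_int ((-1)^(m-1) * int (d choose m))"

definition Lw :: "nat \<Rightarrow> nat \<Rightarrow> (nat \<Rightarrow> nat) \<Rightarrow> nat \<Rightarrow> tmon \<Rightarrow> 'a::comm_ring_1" where
  "Lw d r \<gamma> ii M = (\<Sum>m\<in>{1..d}. cm d m * Fw d r \<gamma> ii m M)"

lemma mdeg_add: "mdeg d (a + b) i = mdeg d a i + mdeg d b i"
  unfolding mdeg_def by (simp add: lookup_add sum.distrib)

lemma keys_add_tmon: "ks (a + b) = ks a \<union> ks (b::tmon)"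
  by (auto simp: in_keys_iff lookup_add)

lemma slots_add: "slots (a + b) = slots a \<union> slots b"
  unfolding slots_def keys_add_tmon by auto

definition Gi :: "nat \<Rightarrow> nat \<Rightarrow> (nat \<Rightarrow> nat) \<Rightarrow> nat \<Rightarrow> tmon \<Rightarrow> tmon \<Rightarrow> bool" where
  "Gi d r \<gamma> m a b \<longleftrightarrow> slots a \<subseteq> {..<m} \<and> slots b \<subseteq> {..<m} \<and> (\<forall>i<r. mdeg d a i + mdeg d b i = \<gamma> i)"

lemma Gi_comm: "Gi d r \<gamma> m a b = Gi d r \<gamma> m b a"
  unfolding Gi_def by (auto simp: add.commute)

definition Xs :: "nat \<Rightarrow> nat \<Rightarrow> (nat \<Rightarrow> nat) \<Rightarrow> nat \<Rightarrow> 'a tpoly \<Rightarrow> 'a tpoly \<Rightarrow> 'a::comm_ring_1" where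
  "Xs d r \<gamma> ii p q = (\<Sum>m\<in>{1..d}. cm d m * (\<Sum>a\<in>ks p. \<Sum>b\<in>ks q.
      (if Gi d r \<gamma> m a b then of_nat (lk a (0,ii)) * (lk p a * lk q b) else 0)))"

lemma Lw_add: "(Lw d r \<gamma> ii (a + b) :: 'a::comm_ring_1) = (\<Sum>m\<in>{1..d}. cm d m *
   ((if Gi d r \<gamma> m a b then of_nat (lk a (0,ii)) else 0) + (if Gi d r \<gamma> m b a then of_nat (lk b (0,ii)) else 0)))"
  unfolding Lw_def Fw_def
  by (rule sum.cong) (auto simp: Gi_def slots_add mdeg_add lookup_add add.commute)

lemma Xs_swap: "Xs d r \<gamma> ii p q = (\<Sum>a\<in>ks p. \<Sum>b\<in>ks q. \<Sum>m\<in>{1..d}. cm d m *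
      (if Gi d r \<gamma> m a b then of_nat (lk a (0,ii)) * (lk p a * lk q b) else 0))"
proof -
  have "Xs d r \<gamma> ii p q = (\<Sum>m\<in>{1..d}. \<Sum>a\<in>ks p. \<Sum>b\<in>ks q. cm d m *
      (if Gi d r \<gamma> m a b then of_nat (lk a (0,ii)) * (lk p a * lk q b) else 0))"
    unfolding Xs_def by (simp add: sum_distrib_left)
  also have "\<dots> = (\<Sum>a\<in>ks p. \<Sum>m\<in>{1..d}. \<Sum>b\<in>ks q. cm d m *
      (if Gi d r \<gamma> m a b then of_nat (lk a (0,ii)) * (lk p a * lk q b) else 0))"
    by (rule sum.swap)
  also have "\<dots> = (\<Sum>a\<in>ks p. \<Sum>b\<in>ks q. \<Sum>m\<in>{1..d}. cm d m *
      (if Gi d r \<gamma> m a b then of_nat (lk a (0,ii)) * (lk p a * lk q b) else 0))"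
    by (rule sum.cong[OF refl], rule sum.swap)
  finally show ?thesis .
qed

lemma PHI_mult_split:
  "PHI (Lw d r \<gamma> ii) (p * q) = Xs d r \<gamma> ii p q + Xs d r \<gamma> ii q (p::'a::comm_ring_1 tpoly)"
proof -
  have "PHI (Lw d r \<gamma> ii) (p * q) = (\<Sum>a\<in>ks p. \<Sum>b\<in>ks q. Lw d r \<gamma> ii (a + b) * (lk p a * lk q b))"
    by (rule PHI_mult)
  also have "\<dots> = (\<Sum>a\<in>ks p. \<Sum>b\<in>ks q. (\<Sum>m\<in>{1..d}. cm d m *
      (if Gi d r \<gamma> m a b then of_nat (lk a (0,ii)) * (lk p a * lk q b) else 0))
    + (\<Sum>m\<in>{1..d}. cm d m *
      (if Gi d r \<gamma> m b a then of_nat (lk b (0,ii)) * (lk q b * lk p a) else 0)))"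
    unfolding Lw_add sum_distrib_right sum.distrib[symmetric]
    by (intro sum.cong refl) (auto simp: algebra_simps)
  also have "\<dots> = Xs d r \<gamma> ii p q + (\<Sum>a\<in>ks p. \<Sum>b\<in>ks q. \<Sum>m\<in>{1..d}. cm d m *
      (if Gi d r \<gamma> m b a then of_nat (lk b (0,ii)) * (lk q b * lk p a) else 0))"
    unfolding Xs_swap by (simp add: sum.distrib)
  also have "(\<Sum>a\<in>ks p. \<Sum>b\<in>ks q. \<Sum>m\<in>{1..d}. cm d m *
      (if Gi d r \<gamma> m b a then of_nat (lk b (0,ii)) * (lk q b * lk p a) else 0)) = Xs d r \<gamma> ii q p"
    unfolding Xs_swap by (rule sum.swap)
  finally show ?thesis .
qed



lemma perm_exists:
  assumes "finite U" "A \<subseteq> U" "B \<subseteq> U" "card A = card B"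
  shows "\<exists>\<sigma>. \<sigma> permutes U \<and> \<sigma> ` A = B"
proof -
  have fA: "finite A" "finite B" using assms finite_subset by blast+
  obtain f where f: "bij_betw f A B" using finite_same_card_bij[OF fA assms(4)] by blast
  have "card (U - A) = card (U - B)"
    using assms fA by (simp add: card_Diff_subset)
  then obtain g where g: "bij_betw g (U - A) (U - B)"
    using finite_same_card_bij[of "U - A" "U - B"] assms by auto
  define \<sigma> where "\<sigma> x = (if x \<in> A then f x else if x \<in> U then g x else x)" for x
  have s1: "bij_betw \<sigma> A B" using f by (rule bij_betw_cong[THEN iffD1, rotated]) (simp add: \<sigma>_def)
  have s2: "bij_betw \<sigma> (U - A) (U - B)" using g by (rule bij_betw_cong[THEN iffD1, rotated]) (simp add: \<sigma>_def)
  have "bij_betw \<sigma> (A \<union> (U - A)) (B \<union> (U - B))"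
    by (rule bij_betw_combine[OF s1 s2]) auto
  moreover have "A \<union> (U - A) = U" "B \<union> (U - B) = U" using assms by auto
  ultimately have "bij_betw \<sigma> U U" by simp
  moreover have "\<sigma> x = x" if "x \<notin> U" for x using that assms(2) by (auto simp: \<sigma>_def)
  ultimately have "\<sigma> permutes U" by (rule bij_imp_permutes)
  moreover have "\<sigma> ` A = B" using s1 by (simp add: bij_betw_def)
  ultimately show ?thesis by blast
qed

lemma perm_exists_fix0:
  assumes "S \<subseteq> {..<d}" "0 \<in> S"
  shows "\<exists>\<sigma>. \<sigma> permutes {..<d} \<and> \<sigma> 0 = 0 \<and> \<sigma> ` {..<card S} = S"
proof -
  have fS: "finite S" using assms finite_subset by blast
  have "card (S - {0}) = card S - 1" using assms fS by simp
  then have c: "card {1..<card S} = card (S - {0})" by simp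
  have "card S \<le> d" using assms card_mono[of "{..<d}" S] by simp
  then have "{1..<card S} \<subseteq> {1..<d}" by auto
  moreover have "S - {0} \<subseteq> {1..<d}" using assms by auto
  ultimately obtain \<sigma> where \<sigma>: "\<sigma> permutes {1..<d}" "\<sigma> ` {1..<card S} = S - {0}"
    using perm_exists[of "{1..<d}" "{1..<card S}" "S - {0}"] c by auto
  have "\<sigma> permutes {..<d}" using \<sigma>(1) by (rule permutes_subset) auto
  moreover have "\<sigma> 0 = 0" using \<sigma>(1) permutes_not_in by fastforce
  moreover have "{..<card S} = insert 0 {1..<card S}" using assms fS card_gt_0_iff by fastforce
  then have "\<sigma> ` {..<card S} = S" using \<sigma>(2) \<open>\<sigma> 0 = 0\<close> assms by auto
  ultimately show ?thesis by blast
qed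

lemma perm_exists_any:
  assumes "T \<subseteq> {..<d}"
  shows "\<exists>\<tau>. \<tau> permutes {..<d} \<and> \<tau> ` {..<card T} = T"
proof -
  have fT: "finite T" using assms finite_subset by blast
  have "card T \<le> d" using assms card_mono[of "{..<d}" T] by simp
  then show ?thesis using perm_exists[of "{..<d}" "{..<card T}" T] assms by auto
qed

definition Y :: "nat \<Rightarrow> nat \<Rightarrow> (nat \<Rightarrow> nat) \<Rightarrow> nat \<Rightarrow> 'a tpoly \<Rightarrow> 'a tpoly \<Rightarrow> nat set \<Rightarrow> nat set \<Rightarrow> 'a::comm_ring_1" where
  "Y d r \<gamma> ii p q S T = (\<Sum>a\<in>ks p. \<Sum>b\<in>ks q.
      (if slots a = S \<and> slots b = T \<and> (\<forall>i<r. mdeg d a i + mdeg d b i = \<gamma> i) then of_nat (lk a (0,ii)) * (lk p a * lk q b) else 0))"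

lemma Y_alt: "Y d r \<gamma> ii p q S T = (\<Sum>a\<in>ks p. (\<Sum>b\<in>ks q.
      (if slots a = S \<and> slots b = T \<and> (\<forall>i<r. mdeg d a i + mdeg d b i = \<gamma> i) then of_nat (lk a (0,ii)) else 0) * lk q b) * lk p a)"
  unfolding Y_def sum_distrib_right by (intro sum.cong refl) (auto simp: mult_ac)

lemma Y_relabel:
  assumes p: "symm d p" and q: "symm d q"
    and s: "\<sigma> permutes {..<d}" "\<sigma> 0 = 0" and t: "\<tau> permutes {..<d}"
  shows "Y d r \<gamma> ii p q S T = Y d r \<gamma> ii p q (\<sigma> ` S) (\<tau> ` T)"
proof -
  let ?H = "\<lambda>S T a b. (if slots a = S \<and> slots b = T \<and> (\<forall>i<r. mdeg d a i + mdeg d b i = \<gamma> i) then of_nat (lk a (0,ii)) else (0::'a))"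
  have "Y d r \<gamma> ii p q S T = (\<Sum>a\<in>ks p. (\<Sum>b\<in>ks q. ?H S T a (perm_mon \<tau> b) * lk q b) * lk p a)"
    unfolding Y_alt by (intro sum.cong refl arg_cong2[where f="(*)"] reindex_symm[OF q t])
  also have "\<dots> = (\<Sum>a\<in>ks p. (\<Sum>b\<in>ks q. ?H S T (perm_mon \<sigma> a) (perm_mon \<tau> b) * lk q b) * lk p a)"
    by (rule reindex_symm[OF p s(1)])
  also have "\<dots> = (\<Sum>a\<in>ks p. (\<Sum>b\<in>ks q. ?H (\<sigma> ` S) (\<tau> ` T) a b * lk q b) * lk p a)"
    by (simp add: slots_perm_mon_eq[OF s(1)] slots_perm_mon_eq[OF t] mdeg_perm_mon[OF s(1)]
        mdeg_perm_mon[OF t] lookup_perm_mon[OF s(1)] s(2) cong: if_cong)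
  also have "\<dots> = Y d r \<gamma> ii p q (\<sigma> ` S) (\<tau> ` T)"
    unfolding Y_alt ..
  finally show ?thesis .
qed

lemma Y_canon:
  assumes p: "symm d p" and q: "symm d q"
    and S: "S \<subseteq> {..<d}" "0 \<in> S" and T: "T \<subseteq> {..<d}"
  shows "Y d r \<gamma> ii p q S T = Y d r \<gamma> ii p q {..<card S} {..<card T}"
proof -
  obtain \<sigma> where \<sigma>: "\<sigma> permutes {..<d}" "\<sigma> 0 = 0" "\<sigma> ` {..<card S} = S"
    using perm_exists_fix0[OF S] by blast
  obtain \<tau> where \<tau>: "\<tau> permutes {..<d}" "\<tau> ` {..<card T} = T"
    using perm_exists_any[OF T] by blast
  show ?thesis using Y_relabel[OF p q \<sigma>(1,2) \<tau>(1), of r \<gamma> ii "{..<card S}" "{..<card T}"] \<sigma>(3) \<tau>(2)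
    by simp
qed

lemma Y_no0:
  assumes "0 \<notin> S"
  shows "Y d r \<gamma> ii p q S T = 0"
proof -
  have "lk a (0, ii) = 0" if "slots a = S" for a
    using that assms unfolding slots_def by (force simp: in_keys_iff)
  then show ?thesis unfolding Y_def by (intro sum.neutral ballI) auto
qed

lemma Y_empty:
  assumes "lk q 0 = 0"
  shows "Y d r \<gamma> ii p q S {} = 0"
proof -
  have "b = 0" if "slots b = {}" for b :: tmon
    using that unfolding slots_def by simp
  moreover have "0 \<notin> ks q" using assms by (simp add: in_keys_iff)
  ultimately show ?thesis unfolding Y_def by (intro sum.neutral ballI) auto
qed



lemma sum_swap4:
  "(\<Sum>x\<in>A. \<Sum>y\<in>B. \<Sum>z\<in>C. \<Sum>w\<in>D. f x y z w) = (\<Sum>z\<in>C. \<Sum>w\<in>D. \<Sum>x\<in>A. \<Sum>y\<in>B. f x y z w)"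
proof -
  have "(\<Sum>x\<in>A. \<Sum>y\<in>B. \<Sum>z\<in>C. \<Sum>w\<in>D. f x y z w) = (\<Sum>x\<in>A. \<Sum>z\<in>C. \<Sum>y\<in>B. \<Sum>w\<in>D. f x y z w)"
    by (rule sum.cong[OF refl], rule sum.swap)
  also have "\<dots> = (\<Sum>z\<in>C. \<Sum>x\<in>A. \<Sum>y\<in>B. \<Sum>w\<in>D. f x y z w)"
    by (rule sum.swap)
  also have "\<dots> = (\<Sum>z\<in>C. \<Sum>x\<in>A. \<Sum>w\<in>D. \<Sum>y\<in>B. f x y z w)"
    by (rule sum.cong[OF refl], rule sum.cong[OF refl], rule sum.swap)
  also have "\<dots> = (\<Sum>z\<in>C. \<Sum>w\<in>D. \<Sum>x\<in>A. \<Sum>y\<in>B. f x y z w)"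
    by (rule sum.cong[OF refl], rule sum.swap)
  finally show ?thesis .
qed

lemma inner_delta2:
  assumes "finite M"
  shows "(\<Sum>S\<in>Pow M. \<Sum>T\<in>Pow M. if slots a = S \<and> slots b = T \<and> D then v else 0) =
         (if slots a \<subseteq> M \<and> slots b \<subseteq> M \<and> D then v else (0::'a::comm_monoid_add))"
proof -
  have "(\<Sum>T\<in>Pow M. if slots a = S \<and> slots b = T \<and> D then v else 0) =
        (\<Sum>T\<in>Pow M. if slots b = T then (if slots a = S \<and> D then v else 0) else 0)" for S
    by (intro sum.cong refl) auto
  also have "\<dots> S = (if slots b \<in> Pow M then (if slots a = S \<and> D then v else 0) else 0)" for S
    using assms by (simp add: sum.delta)
  finally have "(\<Sum>S\<in>Pow M. \<Sum>T\<in>Pow M. if slots a = S \<and> slots b = T \<and> D then v else 0) =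
     (\<Sum>S\<in>Pow M. if slots a = S then (if slots b \<subseteq> M \<and> D then v else 0) else 0)"
    by (intro sum.cong refl) auto
  also have "\<dots> = (if slots a \<in> Pow M then (if slots b \<subseteq> M \<and> D then v else 0) else 0)"
    using assms by (simp add: sum.delta)
  finally show ?thesis by auto
qed

lemma Zm_group:
  "(\<Sum>a\<in>ks p. \<Sum>b\<in>ks q. if Gi d r \<gamma> m a b then of_nat (lk a (0,ii)) * (lk p a * lk q b) else 0)
   = (\<Sum>S\<in>Pow {..<m}. \<Sum>T\<in>Pow {..<m}. Y d r \<gamma> ii p q S T)"
proof -
  have "(\<Sum>S\<in>Pow {..<m}. \<Sum>T\<in>Pow {..<m}. Y d r \<gamma> ii p q S T) =
    (\<Sum>a\<in>ks p. \<Sum>b\<in>ks q. \<Sum>S\<in>Pow {..<m}. \<Sum>T\<in>Pow {..<m}.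
      (if slots a = S \<and> slots b = T \<and> (\<forall>i<r. mdeg d a i + mdeg d b i = \<gamma> i) then of_nat (lk a (0,ii)) * (lk p a * lk q b) else (0::'a)))"
    unfolding Y_def by (rule sum_swap4)
  also have "\<dots> = (\<Sum>a\<in>ks p. \<Sum>b\<in>ks q. if Gi d r \<gamma> m a b then of_nat (lk a (0,ii)) * (lk p a * lk q b) else 0)"
    by (intro sum.cong refl) (simp add: inner_delta2 Gi_def)
  finally show ?thesis by simp
qed

lemma sum_by_card:
  assumes "finite A" "\<And>S. S \<in> A \<Longrightarrow> card S \<le> n"
  shows "(\<Sum>S\<in>A. f (card S)) = (\<Sum>s\<le>n. of_nat (card {S\<in>A. card S = s}) * (f s :: 'a::comm_semiring_1))"
proof -
  have "(\<Sum>S\<in>A. f (card S)) = (\<Sum>s\<le>n. \<Sum>S\<in>{S\<in>A. card S = s}. f (card S))"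
    by (rule sum.group[symmetric]) (use assms in auto)
  also have "\<dots> = (\<Sum>s\<le>n. \<Sum>S\<in>{S\<in>A. card S = s}. f s)"
    by (intro sum.cong refl) auto
  also have "\<dots> = (\<Sum>s\<le>n. of_nat (card {S\<in>A. card S = s}) * f s)"
    by simp
  finally show ?thesis .
qed

lemma cardT: "card {T\<in>Pow {..<m}. card T = t} = m choose t"
proof -
  have "{T\<in>Pow {..<m}. card T = t} = {B. B \<subseteq> {..<m} \<and> card B = t}" by auto
  then show ?thesis using n_subsets[of "{..<m}" t] by simp
qed

lemma card0:
  assumes "1 \<le> m"
  shows "card {S\<in>{S\<in>Pow {..<m}. 0 \<in> S}. card S = s} = (if s = 0 then 0 else (m-1) choose (s-1))"
proof (cases "s = 0")
  case True
  have "{S\<in>{S\<in>Pow {..<m}. 0 \<in> S}. card S = s} = {}"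
  proof -
    have "card S \<noteq> 0" if "S \<subseteq> {..<m}" "0 \<in> S" for S :: "nat set"
      using that finite_subset[OF that(1)] by auto
    then show ?thesis using True by auto
  qed
  then show ?thesis using True by simp
next
  case False
  let ?A = "{S\<in>{S\<in>Pow {..<m}. 0 \<in> S}. card S = s}"
  let ?B = "{B. B \<subseteq> {1..<m} \<and> card B = s - 1}"
  have "bij_betw (\<lambda>S. S - {0}) ?A ?B"
  proof (rule bij_betw_byWitness[where f'="insert 0"])
    show "\<forall>S\<in>?A. insert 0 (S - {0}) = S" by auto
    show "\<forall>B\<in>?B. insert 0 B - {0} = B" by auto
    show "(\<lambda>S. S - {0}) ` ?A \<subseteq> ?B"
    proof
      fix x assume "x \<in> (\<lambda>S. S - {0}) ` ?A"
      then obtain S where "S \<in> ?A" "x = S - {0}" by auto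
      moreover then have "finite S" using finite_subset[of S "{..<m}"] by auto
      ultimately show "x \<in> ?B" by auto
    qed
    show "insert 0 ` ?B \<subseteq> ?A"
    proof
      fix x assume "x \<in> insert 0 ` ?B"
      then obtain B where B: "B \<in> ?B" "x = insert 0 B" by auto
      then have "finite B" using finite_subset[of B "{1..<m}"] by auto
      moreover have "0 \<notin> B" using B by auto
      ultimately show "x \<in> ?A" using B False assms by auto
    qed
  qed
  then have "card ?A = card ?B" by (rule bij_betw_same_card)
  also have "\<dots> = (m - 1) choose (s - 1)" using n_subsets[of "{1..<m}" "s-1"] by simp
  finally show ?thesis using False by simp
qed

lemma card_slots_le:
  assumes "in_tensor d r p" "a \<in> ks p"
  shows "card (slots a) \<le> (\<Sum>i<r. mdeg d a i)"
proof -
  have sub: "ks a \<subseteq> {..<d} \<times> {..<r}" using assms unfolding in_tensor_def by blast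
  have "card (slots a) \<le> card (ks a)" unfolding slots_def by (rule card_image_le) simp
  also have "\<dots> = (\<Sum>x\<in>ks a. 1)" by simp
  also have "\<dots> \<le> (\<Sum>x\<in>ks a. lk a x)"
    by (rule sum_mono) (simp add: in_keys_iff Suc_le_eq)
  also have "\<dots> \<le> (\<Sum>x\<in>{..<d} \<times> {..<r}. lk a x)"
    by (rule sum_mono2) (use sub in auto)
  also have "\<dots> = (\<Sum>j<d. \<Sum>i<r. lk a (j, i))"
    by (simp add: sum.cartesian_product)
  also have "\<dots> = (\<Sum>i<r. mdeg d a i)"
    unfolding mdeg_def by (rule sum.swap)
  finally show ?thesis .
qed



lemma Zm_count:
  assumes p: "symm d p" and q: "symm d q" and m: "1 \<le> m" "m \<le> d"
  shows "(\<Sum>S\<in>Pow {..<m}. \<Sum>T\<in>Pow {..<m}. Y d r \<gamma> ii p q S T) =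
    (\<Sum>s\<le>d. of_nat (if s = 0 then 0 else (m-1) choose (s-1)) *
       (\<Sum>t\<le>d. of_nat (m choose t) * Y d r \<gamma> ii p q {..<s} {..<t}))"
proof -
  let ?y = "\<lambda>s t. Y d r \<gamma> ii p q {..<s} {..<t}"
  let ?A0 = "{S\<in>Pow {..<m}. 0 \<in> S}"
  have cm: "card S \<le> d" if "S \<in> Pow {..<m}" for S
    using that card_mono[of "{..<m}" S] m by auto
  have "(\<Sum>S\<in>Pow {..<m}. \<Sum>T\<in>Pow {..<m}. Y d r \<gamma> ii p q S T) =
        (\<Sum>S\<in>Pow {..<m}. if 0 \<in> S then (\<Sum>T\<in>Pow {..<m}. ?y (card S) (card T)) else 0)"
  proof (intro sum.cong refl)
    fix S assume S: "S \<in> Pow {..<m}"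
    show "(\<Sum>T\<in>Pow {..<m}. Y d r \<gamma> ii p q S T) = (if 0 \<in> S then (\<Sum>T\<in>Pow {..<m}. ?y (card S) (card T)) else 0)"
    proof (cases "0 \<in> S")
      case True
      show ?thesis using True S m
        by (auto intro!: sum.cong Y_canon[OF p q])
    next
      case False
      then show ?thesis by (simp add: Y_no0)
    qed
  qed
  also have "\<dots> = (\<Sum>S\<in>?A0. (\<Sum>T\<in>Pow {..<m}. ?y (card S) (card T)))"
    by (rule sum.inter_filter[symmetric]) simp
  also have "\<dots> = (\<Sum>S\<in>?A0. (\<Sum>t\<le>d. of_nat (m choose t) * ?y (card S) t))"
  proof (intro sum.cong refl)
    fix S
    have "(\<Sum>T\<in>Pow {..<m}. ?y (card S) (card T)) = (\<Sum>t\<le>d. of_nat (card {T\<in>Pow {..<m}. card T = t}) * ?y (card S) t)"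
      by (rule sum_by_card) (use cm in auto)
    then show "(\<Sum>T\<in>Pow {..<m}. ?y (card S) (card T)) = (\<Sum>t\<le>d. of_nat (m choose t) * ?y (card S) t)"
      by (simp only: cardT)
  qed
  also have "\<dots> = (\<Sum>s\<le>d. of_nat (card {S\<in>?A0. card S = s}) * (\<Sum>t\<le>d. of_nat (m choose t) * ?y s t))"
    by (rule sum_by_card) (use cm in auto)
  also have "\<dots> = (\<Sum>s\<le>d. of_nat (if s = 0 then 0 else (m-1) choose (s-1)) * (\<Sum>t\<le>d. of_nat (m choose t) * ?y s t))"
    using card0[OF m(1)] by simp
  finally show ?thesis .
qed

lemma y_degree:
  assumes "in_tensor d r p" "in_tensor d r q" "(\<Sum>i<r. \<gamma> i) \<le> d" "d < s + t"
  shows "Y d r \<gamma> ii p q {..<s} {..<t} = 0"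
  unfolding Y_def
proof (intro sum.neutral ballI)
  fix a b assume ab: "a \<in> ks p" "b \<in> ks q"
  have False if "slots a = {..<s}" "slots b = {..<t}" "\<forall>i<r. mdeg d a i + mdeg d b i = \<gamma> i"
  proof -
    have "s \<le> (\<Sum>i<r. mdeg d a i)" using card_slots_le[OF assms(1) ab(1)] that by simp
    moreover have "t \<le> (\<Sum>i<r. mdeg d b i)" using card_slots_le[OF assms(2) ab(2)] that by simp
    moreover have "(\<Sum>i<r. mdeg d a i) + (\<Sum>i<r. mdeg d b i) = (\<Sum>i<r. \<gamma> i)"
      using that by (simp add: sum.distrib[symmetric])
    ultimately show False using assms by linarith
  qed
  then show "(if slots a = {..<s} \<and> slots b = {..<t} \<and> (\<forall>i<r. mdeg d a i + mdeg d b i = \<gamma> i)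
          then of_nat (lk a (0, ii)) * (lk p a * lk q b) else 0) = 0" by auto
qed

lemma inner_id:
  assumes "1 \<le> s" "1 \<le> t" "s + t \<le> d"
  shows "(\<Sum>m\<in>{1..d}. cm d m * of_nat ((m-1) choose (s-1)) * of_nat (m choose t)) = (0::'a::comm_ring_1)"
proof -
  have "(\<Sum>m\<in>{1..d}. cm d m * of_nat ((m-1) choose (s-1)) * of_nat (m choose t))
     = of_int (\<Sum>m\<in>{1..d}. (-1::int)^(m-1) * of_nat (d choose m) * of_nat ((m-1) choose (s-1)) * of_nat (m choose t))"
    by (simp add: cm_def of_int_sum)
  also have "\<dots> = (0::'a)" using IdProd[OF assms] by simp
  finally show ?thesis .
qed

lemma Xs_zero:
  assumes p: "symm d p" "in_tensor d r p" "lk p 0 = 0"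
    and q: "symm d q" "in_tensor d r q" "lk q 0 = 0"
    and deg: "(\<Sum>i<r. \<gamma> i) \<le> d"
  shows "Xs d r \<gamma> ii p q = (0::'a::comm_ring_1)"
proof -
  let ?y = "\<lambda>s t. Y d r \<gamma> ii p q {..<s} {..<t} :: 'a"
  let ?c = "\<lambda>m s. of_nat (if s = 0 then 0 else (m-1) choose (s-1)) :: 'a"
  have "Xs d r \<gamma> ii p q = (\<Sum>m\<in>{1..d}. cm d m * (\<Sum>s\<le>d. ?c m s * (\<Sum>t\<le>d. of_nat (m choose t) * ?y s t)))"
    unfolding Xs_def Zm_group by (intro sum.cong refl) (simp add: Zm_count[OF p(1) q(1)])
  also have "\<dots> = (\<Sum>m\<in>{1..d}. \<Sum>s\<le>d. \<Sum>t\<le>d. ?y s t * (cm d m * ?c m s * of_nat (m choose t)))"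
    by (simp add: sum_distrib_left mult_ac)
  also have "\<dots> = (\<Sum>s\<le>d. \<Sum>m\<in>{1..d}. \<Sum>t\<le>d. ?y s t * (cm d m * ?c m s * of_nat (m choose t)))"
    by (rule sum.swap)
  also have "\<dots> = (\<Sum>s\<le>d. \<Sum>t\<le>d. \<Sum>m\<in>{1..d}. ?y s t * (cm d m * ?c m s * of_nat (m choose t)))"
    by (rule sum.cong[OF refl], rule sum.swap)
  also have "\<dots> = (\<Sum>s\<le>d. \<Sum>t\<le>d. ?y s t * (\<Sum>m\<in>{1..d}. cm d m * ?c m s * of_nat (m choose t)))"
    by (simp add: sum_distrib_left)
  also have "\<dots> = 0"
  proof (intro sum.neutral ballI)
    fix s t assume st: "s \<in> {..d}" "t \<in> {..d}"
    show "?y s t * (\<Sum>m\<in>{1..d}. cm d m * ?c m s * of_nat (m choose t)) = 0"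
    proof (cases "s = 0")
      case True then show ?thesis by simp
    next
      case s0: False
      show ?thesis
      proof (cases "t = 0")
        case True then show ?thesis using Y_empty[OF q(3)] by simp
      next
        case t0: False
        show ?thesis
        proof (cases "s + t \<le> d")
          case True
          have "(\<Sum>m\<in>{1..d}. cm d m * ?c m s * of_nat (m choose t)) = 0"
            using inner_id[of s t d, where 'a='a] s0 t0 True by simp
          then show ?thesis by simp
        next
          case False
          then show ?thesis using y_degree[OF p(2) q(2) deg] by simp
        qed
      qed
    qed
  qed
  finally show ?thesis .
qed



lemma lookup_mon_on:
  assumes "finite S"
  shows "lk (mon_on r \<alpha> S) (j, i) = (if j \<in> S \<and> i < r then \<alpha> i else 0)"
proof -
  have "lk (mon_on r \<alpha> S) (j, i) = (\<Sum>j'\<in>S. \<Sum>i'<r. (if (j', i') = (j, i) then \<alpha> i' else 0))"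
    unfolding mon_on_def by (simp add: lookup_sum lookup_single when_def)
  also have "\<dots> = (\<Sum>j'\<in>S. if j' = j then (if i < r then \<alpha> i else 0) else 0)"
    by (intro sum.cong refl) (auto simp: sum.delta)
  also have "\<dots> = (if j \<in> S \<and> i < r then \<alpha> i else 0)"
    using assms by (simp add: sum.delta')
  finally show ?thesis .
qed

lemma slots_mon_on:
  assumes "finite S" "\<exists>i<r. \<alpha> i \<noteq> 0"
  shows "slots (mon_on r \<alpha> S) = S"
  unfolding slots_def
proof (intro set_eqI iffI)
  fix j assume "j \<in> fst ` ks (mon_on r \<alpha> S)"
  then obtain x where "x \<in> ks (mon_on r \<alpha> S)" "j = fst x" by auto
  then show "j \<in> S" using lookup_mon_on[OF assms(1)] by (cases x) (auto simp: in_keys_iff split: if_splits)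
next
  fix j assume "j \<in> S"
  obtain i where i: "i < r" "\<alpha> i \<noteq> 0" using assms by blast
  then have "(j, i) \<in> ks (mon_on r \<alpha> S)" using \<open>j \<in> S\<close> lookup_mon_on[OF assms(1)] by (simp add: in_keys_iff)
  then show "j \<in> fst ` ks (mon_on r \<alpha> S)" by force
qed

lemma mdeg_mon_on:
  assumes "S \<subseteq> {..<d}" "i < r"
  shows "mdeg d (mon_on r \<alpha> S) i = card S * \<alpha> i"
proof -
  have fS: "finite S" using assms finite_subset by blast
  have "mdeg d (mon_on r \<alpha> S) i = (\<Sum>j<d. if j \<in> S then \<alpha> i else 0)"
    unfolding mdeg_def using assms by (simp add: lookup_mon_on[OF fS])
  also have "\<dots> = (\<Sum>j\<in>{j\<in>{..<d}. j \<in> S}. \<alpha> i)"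
    by (rule sum.inter_filter[symmetric]) simp
  also have "{j\<in>{..<d}. j \<in> S} = S" using assms by auto
  finally show ?thesis by simp
qed

lemma PHI_single: "PHI w (Poly_Mapping.single M c) = w M * c"
  by (cases "c = 0") (simp_all add: PHI_def)

lemma PHI_zero: "PHI w 0 = 0"
  by (simp add: PHI_def)

lemma PHI_sum: "PHI w (\<Sum>x\<in>X. f x) = (\<Sum>x\<in>X. PHI w (f x))"
  by (induction X rule: infinite_finite_induct) (simp_all add: PHI_zero PHI_add)

lemma PHI_gp:
  fixes \<alpha> :: "nat \<Rightarrow> nat"
  assumes "\<exists>i<r. \<alpha> i \<noteq> 0" "ii < r" "1 \<le> k" "k \<le> d"
  shows "PHI (Lw d r (\<lambda>i. k * \<alpha> i) ii) (gamma_prod d r \<alpha> k :: 'a::comm_ring_1 tpoly) = of_nat (\<alpha> ii) * of_int ((-1)^(k-1))"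
proof -
  let ?Sets = "{S. S \<subseteq> {..<d} \<and> card S = k}"
  have fin: "finite ?Sets" by simp
  have Lw_mon: "Lw d r (\<lambda>i. k * \<alpha> i) ii (mon_on r \<alpha> S) = (\<Sum>m\<in>{1..d}. cm d m * (if S \<subseteq> {..<m} \<and> 0 \<in> S then of_nat (\<alpha> ii) else (0::'a)))"
    if "S \<in> ?Sets" for S
  proof -
    have fS: "finite S" using that finite_subset by blast
    show ?thesis unfolding Lw_def Fw_def
      using that assms by (intro sum.cong refl) (auto simp: slots_mon_on[OF fS assms(1)] mdeg_mon_on lookup_mon_on[OF fS])
  qed
  have "PHI (Lw d r (\<lambda>i. k * \<alpha> i) ii) (gamma_prod d r \<alpha> k :: 'a tpoly) = (\<Sum>S\<in>?Sets. Lw d r (\<lambda>i. k * \<alpha> i) ii (mon_on r \<alpha> S))"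
    unfolding gamma_prod_def PHI_sum PHI_single by simp
  also have "\<dots> = (\<Sum>S\<in>?Sets. \<Sum>m\<in>{1..d}. cm d m * (if S \<subseteq> {..<m} \<and> 0 \<in> S then of_nat (\<alpha> ii) else (0::'a)))"
    by (intro sum.cong refl Lw_mon)
  also have "\<dots> = (\<Sum>m\<in>{1..d}. cm d m * (\<Sum>S\<in>?Sets. (if S \<subseteq> {..<m} \<and> 0 \<in> S then of_nat (\<alpha> ii) else (0::'a))))"
    by (subst sum.swap) (simp add: sum_distrib_left)
  also have "\<dots> = (\<Sum>m\<in>{1..d}. cm d m * (of_nat ((m-1) choose (k-1)) * of_nat (\<alpha> ii)))"
  proof (intro sum.cong refl arg_cong2[where f="(*)"])
    fix m assume m: "m \<in> {1..d}"
    have "(\<Sum>S\<in>?Sets. (if S \<subseteq> {..<m} \<and> 0 \<in> S then of_nat (\<alpha> ii) else (0::'a))) =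
          (\<Sum>S\<in>{S\<in>?Sets. S \<subseteq> {..<m} \<and> 0 \<in> S}. of_nat (\<alpha> ii))"
      by (rule sum.inter_filter[symmetric]) simp
    also have "{S\<in>?Sets. S \<subseteq> {..<m} \<and> 0 \<in> S} = {S\<in>{S\<in>Pow {..<m}. 0 \<in> S}. card S = k}"
      using m by auto
    finally show "(\<Sum>S\<in>?Sets. (if S \<subseteq> {..<m} \<and> 0 \<in> S then of_nat (\<alpha> ii) else (0::'a))) =
          of_nat ((m-1) choose (k-1)) * of_nat (\<alpha> ii)"
      using card0[of m k] m assms(3) by simp
  qed
  also have "\<dots> = of_nat (\<alpha> ii) * (\<Sum>m\<in>{1..d}. cm d m * of_nat ((m-1) choose (k-1)))"
    by (simp add: sum_distrib_left mult_ac)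
  also have "(\<Sum>m\<in>{1..d}. cm d m * of_nat ((m-1) choose (k-1))) = (of_int (\<Sum>m\<in>{1..d}. (-1::int)^(m-1) * of_nat (d choose m) * of_nat ((m-1) choose (k-1))) :: 'a)"
    by (simp add: cm_def of_int_sum)
  also have "\<dots> = of_int ((-1)^(k-1))" using IdG[OF assms(3,4)] by simp
  finally show ?thesis .
qed



lemma Lw_zero_mon:
  assumes "\<exists>i<r. mdeg d M i \<noteq> \<gamma> i"
  shows "Lw d r \<gamma> ii M = 0"
proof -
  have "Fw d r \<gamma> ii m M = (0::'a::comm_ring_1)" for m
    unfolding Fw_def using assms by auto
  then show ?thesis by (simp add: Lw_def)
qed

lemma PHI_const:
  assumes "\<exists>i<r. \<gamma> i \<noteq> 0"
  shows "PHI (Lw d r \<gamma> ii) (Poly_Mapping.single 0 c) = (0::'a::comm_ring_1)"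
proof -
  have "Lw d r \<gamma> ii (0::tmon) = (0::'a)"
    by (rule Lw_zero_mon) (use assms in \<open>auto simp: mdeg_def\<close>)
  then show ?thesis by (simp add: PHI_single)
qed

lemma invariant:
  assumes g0: "\<exists>i<r. \<gamma> i \<noteq> 0" and deg: "(\<Sum>i<r. \<gamma> i) \<le> d"
    and s: "s \<in> subalg_gen {p. symmetric_tensor d r p \<and> (\<exists>\<beta>. mdeg_less r \<beta> \<gamma> \<and> homogeneous_of d r \<beta> p)}"
  shows "in_tensor d r s \<and> symm d s \<and> (\<forall>ii. PHI (Lw d r \<gamma> ii) s = (0::'a::comm_ring_1))"
  using s
proof (induction rule: subalg_gen.induct)
  case (const c)
  then show ?case using PHI_const[OF g0, where 'a='a] by (simp add: in_tensor_single0 symm_single0)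
next
  case (gen g)
  then obtain \<beta> where g: "symmetric_tensor d r g" "mdeg_less r \<beta> \<gamma>" "homogeneous_of d r \<beta> g" by blast
  have "PHI (Lw d r \<gamma> ii) g = 0" for ii
    unfolding PHI_def
  proof (intro sum.neutral ballI)
    fix M assume "M \<in> ks g"
    then have "\<forall>i<r. mdeg d M i = \<beta> i" using g(3) unfolding homogeneous_of_def by blast
    moreover obtain i where "i < r" "\<beta> i \<noteq> \<gamma> i" using g(2) unfolding mdeg_less_def by blast
    ultimately have "Lw d r \<gamma> ii M = (0::'a)" by (intro Lw_zero_mon) auto
    then show "Lw d r \<gamma> ii M * lk g M = 0" by simp
  qed
  then show ?case using g(1) unfolding symmetric_tensor_def symm_def by blast
next
  case (add p q)
  then show ?case by (simp add: in_tensor_add symm_add PHI_add)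
next
  case (mult p q)
  let ?p0 = "Poly_Mapping.single 0 (lk p 0) :: 'a tpoly"
  let ?q0 = "Poly_Mapping.single 0 (lk q 0) :: 'a tpoly"
  let ?p' = "p - ?p0" and ?q' = "q - ?q0"
  have ip: "in_tensor d r ?p'" "symm d ?p'" "lk ?p' 0 = 0"
    using mult by (simp_all add: in_tensor_diff in_tensor_single0 symm_diff symm_single0 lookup_minus)
  have iq: "in_tensor d r ?q'" "symm d ?q'" "lk ?q' 0 = 0"
    using mult by (simp_all add: in_tensor_diff in_tensor_single0 symm_diff symm_single0 lookup_minus)
  have eq: "p * q = ?p0 * q + ?q0 * ?p' + ?p' * ?q'"
  proof -
    have "p * q = (?p0 + ?p') * (?q0 + ?q')" by simp
    then show ?thesis by (simp add: algebra_simps)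
  qed
  have "PHI (Lw d r \<gamma> ii) (p * q) = 0" for ii
  proof -
    have "PHI (Lw d r \<gamma> ii) ?p' = 0"
    proof -
      have "PHI (Lw d r \<gamma> ii) ?p0 = 0" by (rule PHI_const[OF g0])
      then show ?thesis using mult by (simp add: PHI_diff)
    qed
    moreover have "PHI (Lw d r \<gamma> ii) (?p' * ?q') = 0"
      using PHI_mult_split[of d r \<gamma> ii ?p' ?q'] Xs_zero[OF ip(2,1,3) iq(2,1,3) deg, of ii]
        Xs_zero[OF iq(2,1,3) ip(2,1,3) deg, of ii] by simp
    ultimately show ?thesis
      using mult unfolding eq by (simp add: PHI_add PHI_single0_mult)
  qed
  then show ?case using mult by (simp add: in_tensor_mult symm_mult)
qed

theorem corollary7p14:
  fixes r d k :: nat and \<alpha> :: "nat \<Rightarrow> nat"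
  assumes "r \<ge> 1" and "d \<ge> 1" and "k \<ge> 1"
    and "\<exists>i<r. \<alpha> i \<noteq> 0"
    and "(of_nat (Gcd (\<alpha> ` {..<r})) :: 'a::comm_ring_1) dvd 1"
    and "k * (\<Sum>i<r. \<alpha> i) \<le> d"
  shows "(gamma_prod d r \<alpha> k :: 'a tpoly) \<notin> Gamma_less d r (\<lambda>i. k * \<alpha> i)"
proof
  assume mem: "(gamma_prod d r \<alpha> k :: 'a tpoly) \<in> Gamma_less d r (\<lambda>i. k * \<alpha> i)"
  obtain i0 where i0: "i0 < r" "\<alpha> i0 \<noteq> 0" using assms(4) by blast
  have g0: "\<exists>i<r. k * \<alpha> i \<noteq> 0" using i0 assms(3) by auto
  have deg: "(\<Sum>i<r. k * \<alpha> i) \<le> d" using assms(6) by (simp add: sum_distrib_left)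
  have "\<alpha> i0 \<le> (\<Sum>i<r. \<alpha> i)" using i0 by (intro member_le_sum) auto
  then have "1 \<le> (\<Sum>i<r. \<alpha> i)" using i0 by linarith
  then have kd: "k \<le> d" using assms(6) by (metis le_trans mult.right_neutral mult_le_mono2)
  have inv: "\<forall>ii. PHI (Lw d r (\<lambda>i. k * \<alpha> i) ii) (gamma_prod d r \<alpha> k :: 'a tpoly) = 0"
    using invariant[OF g0 deg mem[unfolded Gamma_less_def]] by blast
  have z: "(of_nat (\<alpha> ii) :: 'a) = 0" if "ii < r" for ii
  proof -
    have "(of_nat (\<alpha> ii) :: 'a) * of_int ((-1)^(k-1)) = 0"
      using inv PHI_gp[OF assms(4) that assms(3) kd, where 'a='a] by simp
    then have "(of_nat (\<alpha> ii) :: 'a) * of_int ((-1)^(k-1)) * of_int ((-1)^(k-1)) = 0" by simp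
    moreover have "(of_int ((-1::int)^(k-1)) :: 'a) * of_int ((-1)^(k-1)) = 1"
      by (simp flip: of_int_mult power_mult_distrib)
    ultimately show ?thesis by (simp add: mult.assoc)
  qed
  have "CHAR('a) dvd Gcd (\<alpha> ` {..<r})"
    by (rule Gcd_greatest) (use z in \<open>auto simp: of_nat_eq_0_iff_char_dvd\<close>)
  then have "(of_nat (Gcd (\<alpha> ` {..<r})) :: 'a) = 0" by (simp add: of_nat_eq_0_iff_char_dvd)
  then show False using assms(5) by simp
qed


end
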